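(* Let $N\geq3$, $2<q<2^*=\frac{2N}{N-2}$, $\kappa>0$, and let $V:\mathbb{R}^N\to\mathbb{R}$ be continuous with $V_0\leq V(x)\leq V_\infty$ for all $x$, for constants $0<V_0\leq V_\infty$. Let $g$, $G$ be as in the context and define $J_\kappa:H^1(\mathbb{R}^N)\to\mathbb{R}$ by $$J_\kappa(v)=\frac12\int_{\mathbb{R}^N}|\nabla v|^2dx+\frac12\int_{\mathbb{R}^N}V(x)|G^{-1}(v)|^2dx-\frac1q\int_{\mathbb{R}^N}|G^{-1}(v)|^qdx.$$ If $v\in C^2(\mathbb{R}^N)\cap H^1(\mathbb{R}^N)$ is a critical point of $J_\kappa$, then $u=G^{-1}(v)\in C^2(\mathbb{R}^N)\cap H^1(\mathbb{R}^N)$ and $u$ is a classical solution of $$-\mathrm{div}(g^2(u)\nabla u)+g(u)g'(u)|\nabla u|^2+V(x)u=|u|^{q-2}u\quad\text{in }\mathbb{R}^N.$$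
   Context: $g:\mathbb{R}\to\mathbb{R}$ is defined by $g(t)=\sqrt{1-\kappa t^2}$ if $0\leq t<\sqrt{1/(3\kappa)}$, $g(t)=\frac{1}{3\sqrt{2\kappa}\,t}+\sqrt{\frac16}$ if $t\geq\sqrt{1/(3\kappa)}$, and $g(t)=g(-t)$ for $t<0$; $G(t)=\int_0^tg(s)\,ds$, and $G^{-1}$ is the inverse of $G$. $J_\kappa$ is $C^1$ on $H^1(\mathbb{R}^N)$ with $J_\kappa'(v)\psi=\int_{\mathbb{R}^N}\big[\nabla v\cdot\nabla\psi+V(x)\frac{G^{-1}(v)}{g(G^{-1}(v))}\psi-\frac{|G^{-1}(v)|^{q-2}G^{-1}(v)}{g(G^{-1}(v))}\psi\big]dx$. *)

theory Defs
  imports "HOL-Analysis.Analysis"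
begin

definition gk :: "real \<Rightarrow> real \<Rightarrow> real" where
  "gk \<kappa> t = (if \<bar>t\<bar> < sqrt (1 / (3 * \<kappa>)) then sqrt (1 - \<kappa> * t\<^sup>2)
               else 1 / (3 * sqrt (2 * \<kappa>) * \<bar>t\<bar>) + sqrt (1 / 6))"

definition Gk :: "real \<Rightarrow> real \<Rightarrow> real" where
  "Gk \<kappa> t = (LBINT s=0..t. gk \<kappa> s)"

definition Ginvk :: "real \<Rightarrow> real \<Rightarrow> real" where
  "Ginvk \<kappa> = inv (Gk \<kappa>)"

definition pd :: "'n::finite \<Rightarrow> (real^'n \<Rightarrow> real) \<Rightarrow> real^'n \<Rightarrow> real" where
  "pd i f x = deriv (\<lambda>t. f (x + t *\<^sub>R axis i 1)) 0"

definition has_pd :: "'n::finite \<Rightarrow> (real^'n \<Rightarrow> real) \<Rightarrow> real^'n \<Rightarrow> bool" where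
  "has_pd i f x \<longleftrightarrow> (\<lambda>t. f (x + t *\<^sub>R axis i 1)) differentiable (at 0)"

fun pds :: "'n::finite list \<Rightarrow> (real^'n \<Rightarrow> real) \<Rightarrow> real^'n \<Rightarrow> real" where
  "pds [] f = f"
| "pds (i # is) f = pd i (pds is f)"

definition C2 :: "(real^'n::finite \<Rightarrow> real) \<Rightarrow> bool" where
  "C2 f \<longleftrightarrow> (\<forall>is. length is \<le> 2 \<longrightarrow> continuous_on UNIV (pds is f)) \<and>
            (\<forall>is i x. length is \<le> 1 \<longrightarrow> has_pd i (pds is f) x)"

definition smooth :: "(real^'n::finite \<Rightarrow> real) \<Rightarrow> bool" where
  "smooth f \<longleftrightarrow> (\<forall>is. continuous_on UNIV (pds is f)) \<and> (\<forall>is i x. has_pd i (pds is f) x)"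

definition test_fun :: "(real^'n::finite \<Rightarrow> real) \<Rightarrow> bool" where
  "test_fun \<phi> \<longleftrightarrow> smooth \<phi> \<and> compact (closure {x. \<phi> x \<noteq> 0})"

definition L2 :: "(real^'n::finite \<Rightarrow> real) \<Rightarrow> bool" where
  "L2 f \<longleftrightarrow> f \<in> borel_measurable lebesgue \<and> integrable lebesgue (\<lambda>x. (f x)\<^sup>2)"

definition weak_pd :: "'n::finite \<Rightarrow> (real^'n \<Rightarrow> real) \<Rightarrow> (real^'n \<Rightarrow> real) \<Rightarrow> bool" where
  "weak_pd i v w \<longleftrightarrow> (\<forall>\<phi>. test_fun \<phi> \<longrightarrow>
      integrable lebesgue (\<lambda>x. v x * pd i \<phi> x) \<and> integrable lebesgue (\<lambda>x. w x * \<phi> x) \<and>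
      (\<integral>x. v x * pd i \<phi> x \<partial>lebesgue) = - (\<integral>x. w x * \<phi> x \<partial>lebesgue))"

definition H1 :: "(real^'n::finite \<Rightarrow> real) set" where
  "H1 = {v. L2 v \<and> (\<forall>i. \<exists>w. L2 w \<and> weak_pd i v w)}"

definition weak_grad :: "(real^'n::finite \<Rightarrow> real) \<Rightarrow> 'n \<Rightarrow> real^'n \<Rightarrow> real" where
  "weak_grad v i = (SOME w. L2 w \<and> weak_pd i v w)"

definition J :: "real \<Rightarrow> real \<Rightarrow> (real^'n::finite \<Rightarrow> real) \<Rightarrow> (real^'n \<Rightarrow> real) \<Rightarrow> real" where
  "J \<kappa> q V v = 1/2 * (\<integral>x. (\<Sum>i\<in>UNIV. (weak_grad v i x)\<^sup>2) \<partial>lebesgue)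
      + 1/2 * (\<integral>x. V x * \<bar>Ginvk \<kappa> (v x)\<bar>\<^sup>2 \<partial>lebesgue)
      - 1/q * (\<integral>x. \<bar>Ginvk \<kappa> (v x)\<bar> powr q \<partial>lebesgue)"

definition J_deriv :: "real \<Rightarrow> real \<Rightarrow> (real^'n::finite \<Rightarrow> real) \<Rightarrow> (real^'n \<Rightarrow> real)
     \<Rightarrow> (real^'n \<Rightarrow> real) \<Rightarrow> real" where
  "J_deriv \<kappa> q V v \<psi> = (\<integral>x. (\<Sum>i\<in>UNIV. weak_grad v i x * weak_grad \<psi> i x)
      + V x * Ginvk \<kappa> (v x) / gk \<kappa> (Ginvk \<kappa> (v x)) * \<psi> x
      - \<bar>Ginvk \<kappa> (v x)\<bar> powr (q - 2) * Ginvk \<kappa> (v x) / gk \<kappa> (Ginvk \<kappa> (v x)) * \<psi> x \<partial>lebesgue)"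

definition critical_point :: "real \<Rightarrow> real \<Rightarrow> (real^'n::finite \<Rightarrow> real) \<Rightarrow> (real^'n \<Rightarrow> real) \<Rightarrow> bool" where
  "critical_point \<kappa> q V v \<longleftrightarrow> v \<in> H1 \<and> (\<forall>\<psi>\<in>H1. J_deriv \<kappa> q V v \<psi> = 0)"

definition classical_solution :: "real \<Rightarrow> real \<Rightarrow> (real^'n::finite \<Rightarrow> real) \<Rightarrow> (real^'n \<Rightarrow> real) \<Rightarrow> bool" where
  "classical_solution \<kappa> q V u \<longleftrightarrow> C2 u \<and> (\<forall>x.
      - (\<Sum>i\<in>UNIV. pd i (\<lambda>y. (gk \<kappa> (u y))\<^sup>2 * pd i u y) x)
      + gk \<kappa> (u x) * deriv (gk \<kappa>) (u x) * (\<Sum>i\<in>UNIV. (pd i u x)\<^sup>2)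
      + V x * u x = \<bar>u x\<bar> powr (q - 2) * u x)"

end

theory Submission
  imports Defs "HOL-Computational_Algebra.Polynomial"
begin

definition Fp :: "real poly \<Rightarrow> real \<Rightarrow> real" where
  "Fp p t = (if 0 < t then poly p (1/t) * exp (-1/t) else 0)"

definition Qp :: "real poly \<Rightarrow> real poly" where
  "Qp p = [:0,0,1:] * (p - pderiv p)"

lemma poly_exp_lim: fixes p :: "real poly" shows "((\<lambda>y. poly p y * exp (-y)) \<longlongrightarrow> 0) at_top"
proof -
  have "((\<lambda>y. \<Sum>i\<le>degree p. coeff p i * (y ^ i / exp y)) \<longlongrightarrow> (\<Sum>i\<le>degree p. coeff p i * 0)) at_top"
    by (intro tendsto_sum tendsto_mult tendsto_const tendsto_power_div_exp_0)
  moreover have "poly p y * exp (-y) = (\<Sum>i\<le>degree p. coeff p i * (y ^ i / exp y))" for y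
    by (simp add: poly_altdef exp_minus divide_inverse sum_distrib_right mult.assoc)
  ultimately show ?thesis by simp
qed

lemma Fp_right_lim: "((\<lambda>s. Fp p s / s) \<longlongrightarrow> 0) (at_right 0)"
proof -
  have lim: "((\<lambda>y. poly ([:0,1:]*p) y * exp (-y)) \<longlongrightarrow> 0) at_top" by (rule poly_exp_lim)
  have f: "filterlim (\<lambda>s::real. 1/s) at_top (at_right 0)"
    using filterlim_inverse_at_top_right by (simp add: inverse_eq_divide)
  have "((\<lambda>s. poly ([:0,1:]*p) (1/s) * exp (-(1/s))) \<longlongrightarrow> 0) (at_right 0)"
    using filterlim_compose[OF lim f] by simp
  moreover have "\<forall>\<^sub>F s in at_right 0. poly ([:0,1:]*p) (1/s) * exp (-(1/s)) = Fp p s / s"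
    by (rule eventually_at_rightI[where b=1]) (auto simp: Fp_def)
  ultimately show ?thesis by (rule Lim_transform_eventually)
qed

lemma inv_deriv_aux: "(t::real) > 0 \<Longrightarrow> ((\<lambda>t. 1/t) has_real_derivative -1/t^2) (at t)"
  by (rule derivative_eq_intros refl | simp add: power2_eq_square)+
lemma exp_inv_deriv_aux: "(t::real) > 0 \<Longrightarrow> ((\<lambda>t. exp (-1/t)) has_real_derivative exp (-1/t) * (1/t^2)) (at t)"
  by (rule derivative_eq_intros refl | simp add: power2_eq_square)+

lemma Fp_deriv: "(Fp p has_real_derivative Fp (Qp p) t) (at t)"
proof (cases "0 < t")
  case True
  have d: "((\<lambda>t. poly p (1/t) * exp (-1/t)) has_real_derivative
      (poly (pderiv p) (1/t) * (- 1/t^2) * exp (-1/t) + exp (-1/t) * (1/t^2) * poly p (1/t))) (at t)"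
    by (rule DERIV_mult[OF DERIV_chain2[OF poly_DERIV inv_deriv_aux[OF True]] exp_inv_deriv_aux[OF True]])
  have eq: "poly (pderiv p) (1/t) * (- 1/t^2) * exp (-1/t) + exp (-1/t) * (1/t^2) * poly p (1/t)
       = Fp (Qp p) t"
    using True by (simp add: Fp_def Qp_def algebra_simps power2_eq_square)
  show ?thesis
  proof (rule has_field_derivative_transform_within_open[where S="{0<..}"])
    show "(\<lambda>t. poly p (1/t) * exp (-1/t)) x = Fp p x" if "x \<in> {0<..}" for x
      using that by (simp add: Fp_def)
  qed (use d eq True in auto)
next
  case False
  show ?thesis
  proof (cases "t < 0")
    case True
    show ?thesis
    proof (rule has_field_derivative_transform_within_open[where S="{..<0}" and f="\<lambda>_. 0"])
      show "((\<lambda>_. 0) has_real_derivative Fp (Qp p) t) (at t)"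
        using True by (simp add: Fp_def)
    qed (use True in \<open>auto simp: Fp_def\<close>)
  next
    case False
    with \<open>\<not> 0 < t\<close> have t0: "t = 0" by simp
    have "((\<lambda>s. (Fp p (0 + s) - Fp p 0) / s) \<longlongrightarrow> 0) (at 0)"
    proof (rule filterlim_split_at)
      show "((\<lambda>s. (Fp p (0 + s) - Fp p 0) / s) \<longlongrightarrow> 0) (at_right 0)"
        using Fp_right_lim[of p] by (simp add: Fp_def)
      have "\<forall>\<^sub>F s in at_left 0. (Fp p (0 + s) - Fp p 0) / s = 0"
        by (rule eventually_at_leftI[where a="-1"]) (auto simp: Fp_def)
      then show "((\<lambda>s. (Fp p (0 + s) - Fp p 0) / s) \<longlongrightarrow> 0) (at_left 0)"
        by (rule tendsto_eventually)
    qed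
    moreover have "Fp (Qp p) 0 = 0" by (simp add: Fp_def)
    ultimately show ?thesis unfolding t0 DERIV_def by simp
  qed
qed

lemma Fp_cont: "isCont (Fp p) t"
  using Fp_deriv DERIV_isCont by blast

lemma Fp_cont_on: "continuous_on S (Fp p)"
  using Fp_cont continuous_at_imp_continuous_on by blast

lemma Fp1: "Fp 1 t = (if 0 < t then exp (-1/t) else 0)"
  by (simp add: Fp_def)

lemma Fp1_nonneg: "0 \<le> Fp 1 t"
  by (simp add: Fp1)

lemma Fp1_le1: "Fp 1 t \<le> 1"
  by (simp add: Fp1)

lemma Fp1_pos: "0 < t \<Longrightarrow> 0 < Fp 1 t"
  by (simp add: Fp1)

lemma Fp1_zero: "t \<le> 0 \<Longrightarrow> Fp 1 t = 0"
  by (simp add: Fp1)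

lemma Fp1_mono: "0 < s \<Longrightarrow> s \<le> t \<Longrightarrow> Fp 1 s \<le> Fp 1 t"
  by (simp add: Fp1 divide_simps)

lemma Fp1_lim: "0 < s \<Longrightarrow> (\<lambda>n. Fp 1 (real (Suc n) * s)) \<longlonglongrightarrow> 1"
proof -
  assume s: "0 < s"
  have "(\<lambda>n. exp (- (inverse s * inverse (real (Suc n))))) \<longlonglongrightarrow> exp (- (inverse s * 0))"
    by (intro tendsto_intros LIMSEQ_inverse_real_of_nat)
  moreover have "Fp 1 (real (Suc n) * s) = exp (- (inverse s * inverse (real (Suc n))))" for n
    using s by (simp add: Fp1 field_simps add_pos_nonneg)
  ultimately show ?thesis by simp
qed


lemma has_pdI:
  assumes "((\<lambda>t. f (x + t *\<^sub>R axis i 1)) has_real_derivative D) (at 0)"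
  shows "has_pd i f x" "pd i f x = D"
  using assms unfolding has_pd_def pd_def
  by (auto simp: real_differentiable_def DERIV_imp_deriv)

lemma has_pdD:
  assumes "has_pd i f x"
  shows "((\<lambda>t. f (x + t *\<^sub>R axis i 1)) has_real_derivative pd i f x) (at 0)"
  using assms unfolding has_pd_def pd_def
  by (simp add: DERIV_deriv_iff_real_differentiable)

lemma pd_line_deriv:
  assumes "\<And>y. has_pd i f y"
  shows "((\<lambda>t. f (x + t *\<^sub>R axis i 1)) has_real_derivative pd i f (x + s *\<^sub>R axis i 1)) (at s)"
proof -
  have "((\<lambda>t. f ((x + s *\<^sub>R axis i 1) + t *\<^sub>R axis i 1)) has_real_derivative pd i f (x + s *\<^sub>R axis i 1)) (at 0)"
    by (rule has_pdD[OF assms])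
  then have "((\<lambda>t. f (x + (t + s) *\<^sub>R axis i 1)) has_real_derivative pd i f (x + s *\<^sub>R axis i 1)) (at 0)"
    by (simp add: algebra_simps scaleR_add_left)
  then have "((\<lambda>t. f (x + t *\<^sub>R axis i 1)) has_real_derivative pd i f (x + s *\<^sub>R axis i 1)) (at (0 + s))"
    by (subst DERIV_shift) simp
  then show ?thesis by simp
qed

lemma pd_const: "has_pd i (\<lambda>x. c) x" "pd i (\<lambda>x. c) x = 0"
  by (rule has_pdI, rule DERIV_const)+

lemma pd_proj: "has_pd i (\<lambda>x. x $ j) x" "pd i (\<lambda>x. x $ j) x = (if j = i then 1 else 0)"
proof -
  have "((\<lambda>t. (x + t *\<^sub>R axis i 1) $ j) has_real_derivative (if j = i then 1 else 0)) (at 0)"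
    by (cases "j = i") (auto simp: axis_def intro!: derivative_eq_intros)
  then show "has_pd i (\<lambda>x. x $ j) x" "pd i (\<lambda>x. x $ j) x = (if j = i then 1 else 0)"
    by (rule has_pdI)+
qed

lemma pd_add:
  assumes "has_pd i f x" "has_pd i g x"
  shows "has_pd i (\<lambda>x. f x + g x) x" "pd i (\<lambda>x. f x + g x) x = pd i f x + pd i g x"
  using DERIV_add[OF has_pdD[OF assms(1)] has_pdD[OF assms(2)]] by (rule has_pdI)+

lemma pd_mult:
  assumes "has_pd i f x" "has_pd i g x"
  shows "has_pd i (\<lambda>x. f x * g x) x" "pd i (\<lambda>x. f x * g x) x = pd i f x * g x + f x * pd i g x"
proof -
  have "((\<lambda>t. f (x + t *\<^sub>R axis i 1) * g (x + t *\<^sub>R axis i 1)) has_real_derivative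
      pd i f x * g (x + 0 *\<^sub>R axis i 1) + pd i g x * f (x + 0 *\<^sub>R axis i 1)) (at 0)"
    by (rule DERIV_mult[OF has_pdD[OF assms(1)] has_pdD[OF assms(2)]])
  then show "has_pd i (\<lambda>x. f x * g x) x" "pd i (\<lambda>x. f x * g x) x = pd i f x * g x + f x * pd i g x"
    by (auto dest: has_pdI simp: algebra_simps)
qed

lemma pd_chain:
  assumes "has_pd i f x" "(\<phi> has_real_derivative D) (at (f x))"
  shows "has_pd i (\<lambda>x. \<phi> (f x)) x" "pd i (\<lambda>x. \<phi> (f x)) x = D * pd i f x"
proof -
  have h: "((\<lambda>t. f (x + t *\<^sub>R axis i 1)) has_real_derivative pd i f x) (at 0)"
    by (rule has_pdD[OF assms(1)])
  have h2: "(\<phi> has_real_derivative D) (at ((\<lambda>t. f (x + t *\<^sub>R axis i 1)) 0))"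
    using assms(2) by simp
  have "((\<lambda>t. \<phi> (f (x + t *\<^sub>R axis i 1))) has_real_derivative D * pd i f x) (at 0)"
    using DERIV_chain2[OF h2 h] by simp
  then show "has_pd i (\<lambda>x. \<phi> (f x)) x" "pd i (\<lambda>x. \<phi> (f x)) x = D * pd i f x"
    by (rule has_pdI)+
qed

inductive_set Acl :: "(real^'n::finite \<Rightarrow> real) set" where
  const: "(\<lambda>x. c) \<in> Acl"
| proj: "(\<lambda>x. x $ j) \<in> Acl"
| add: "f \<in> Acl \<Longrightarrow> g \<in> Acl \<Longrightarrow> (\<lambda>x. f x + g x) \<in> Acl"
| mult: "f \<in> Acl \<Longrightarrow> g \<in> Acl \<Longrightarrow> (\<lambda>x. f x * g x) \<in> Acl"
| comp: "f \<in> Acl \<Longrightarrow> (\<lambda>x. Fp p (f x)) \<in> Acl"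

lemma Acl_props:
  assumes "f \<in> Acl"
  shows "continuous_on UNIV f \<and> (\<forall>i x. has_pd i f x) \<and> (\<forall>i. pd i f \<in> Acl)"
  using assms
proof induction
  case (const c)
  have e: "pd i (\<lambda>x::real^'a. c) = (\<lambda>x. 0)" for i by (rule ext) (rule pd_const)
  show ?case using pd_const by (auto simp only: e intro: Acl.const continuous_on_const)
next
  case (proj j)
  have e: "pd i (\<lambda>x::real^'a. x $ j) = (\<lambda>x. if j = i then 1 else 0)" for i by (rule ext) (rule pd_proj)
  show ?case using pd_proj by (auto simp only: e intro: Acl.const linear_continuous_on bounded_linear_vec_nth)
next
  case (add f g)
  have hf: "\<And>i x. has_pd i f x" and hg: "\<And>i x. has_pd i g x" using add.IH by blast+
  have e: "pd i (\<lambda>x. f x + g x) = (\<lambda>x. pd i f x + pd i g x)" for i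
    by (intro ext pd_add hf hg)
  have "has_pd i (\<lambda>x. f x + g x) x" for i x by (rule pd_add(1)[OF hf hg])
  moreover have "pd i (\<lambda>x. f x + g x) \<in> Acl" for i
    unfolding e using add.IH by (intro Acl.add) auto
  moreover have "continuous_on UNIV (\<lambda>x. f x + g x)"
    using add.IH by (intro continuous_on_add) auto
  ultimately show ?case by (intro conjI allI) auto
next
  case (mult f g)
  have hf: "\<And>i x. has_pd i f x" and hg: "\<And>i x. has_pd i g x" using mult.IH by blast+
  have e: "pd i (\<lambda>x. f x * g x) = (\<lambda>x. pd i f x * g x + f x * pd i g x)" for i
    by (intro ext pd_mult hf hg)
  have "has_pd i (\<lambda>x. f x * g x) x" for i x by (rule pd_mult(1)[OF hf hg])
  moreover have "pd i (\<lambda>x. f x * g x) \<in> Acl" for i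
    unfolding e using mult.IH mult.hyps by (intro Acl.add[OF Acl.mult Acl.mult]) auto
  moreover have "continuous_on UNIV (\<lambda>x. f x * g x)"
    using mult.IH by (intro continuous_on_mult) auto
  ultimately show ?case by (intro conjI allI) auto
next
  case (comp f p)
  have hf: "\<And>i x. has_pd i f x" using comp.IH by blast
  have e: "pd i (\<lambda>x. Fp p (f x)) = (\<lambda>x. Fp (Qp p) (f x) * pd i f x)" for i
    by (rule ext, rule pd_chain(2)[OF hf Fp_deriv])
  have "continuous_on UNIV (\<lambda>x. Fp p (f x))"
    using comp.IH continuous_on_compose2[OF Fp_cont_on[of UNIV p], of UNIV f] by auto
  moreover have "has_pd i (\<lambda>x. Fp p (f x)) x" for i x by (rule pd_chain(1)[OF hf Fp_deriv])
  moreover have "pd i (\<lambda>x. Fp p (f x)) \<in> Acl" for i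
    unfolding e using comp.IH comp.hyps by (intro Acl.mult[OF Acl.comp]) auto
  ultimately show ?case by (intro conjI allI) auto
qed

lemma Acl_pds: "f \<in> Acl \<Longrightarrow> pds is f \<in> Acl"
  by (induction "is") (auto dest: Acl_props)

lemma Acl_smooth: "f \<in> Acl \<Longrightarrow> smooth f"
  unfolding smooth_def using Acl_pds Acl_props by blast

lemma Acl_prod: "finite S \<Longrightarrow> (\<And>j. j \<in> S \<Longrightarrow> f j \<in> Acl) \<Longrightarrow> (\<lambda>x. \<Prod>j\<in>S. f j x) \<in> Acl"
  by (induction S rule: finite_induct) (auto intro: Acl.const Acl.mult)


lemma cont_meas: "continuous_on UNIV (f::real^'n::finite \<Rightarrow> real) \<Longrightarrow> f \<in> borel_measurable lebesgue"
  by (simp add: borel_measurable_continuous_onI measurable_completion)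

lemma cont_meas_borel: "continuous_on UNIV (f::real^'n::finite \<Rightarrow> real) \<Longrightarrow> f \<in> borel_measurable borel"
  by (simp add: borel_measurable_continuous_onI)

lemma int_cont_supp:
  fixes f :: "real^'n::finite \<Rightarrow> real"
  assumes c: "continuous_on UNIV f" and s: "\<And>x. r < norm x \<Longrightarrow> f x = 0"
  shows "integrable lebesgue f"
proof -
  have "integrable lborel (\<lambda>x. indicat_real (cball 0 r) x *\<^sub>R f x)"
    by (rule borel_integrable_compact) (auto intro: continuous_on_subset[OF c])
  moreover have "(\<lambda>x. indicat_real (cball 0 r) x *\<^sub>R f x) = f"
  proof (rule ext)
    fix x show "indicat_real (cball 0 r) x *\<^sub>R f x = f x"
      by (cases "norm x \<le> r") (auto simp: s indicator_def)
  qed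
  ultimately have "integrable lborel f" by simp
  then show ?thesis using cont_meas_borel[OF c] by (simp add: integrable_completion)
qed

lemma lebesgue_translate:
  fixes f :: "real^'n::finite \<Rightarrow> real"
  assumes c: "continuous_on UNIV f"
  shows "(\<integral>x. f (a + x) \<partial>lebesgue) = (\<integral>x. f x \<partial>lebesgue)"
proof -
  have m: "f \<in> borel_measurable borel" by (rule cont_meas_borel[OF c])
  have m2: "(\<lambda>x. f (a + x)) \<in> borel_measurable borel"
    by (rule cont_meas_borel) (intro continuous_on_compose2[OF c] continuous_intros, auto)
  have "lborel = density (distr lborel borel (\<lambda>x::real^'n. a + 1 *\<^sub>R x)) (\<lambda>_. \<bar>1::real\<bar>^DIM(real^'n))"
    by (rule lborel_affine) simp
  then have L: "lborel = distr lborel borel (\<lambda>x::real^'n. a + x)"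
    by (simp add: density_1)
  have "(\<integral>x. f x \<partial>lborel) = (\<integral>x. f x \<partial>distr lborel borel (\<lambda>x::real^'n. a + x))"
    using L by simp
  also have "\<dots> = (\<integral>x. f (a + x) \<partial>lborel)"
    by (rule integral_distr) (auto simp: m)
  finally show ?thesis using m m2 by (simp add: integral_completion)
qed

lemma pd_vanish:
  fixes g :: "real^'n::finite \<Rightarrow> real"
  assumes s: "\<And>y. r < norm y \<Longrightarrow> g y = 0" and x: "r < norm x" and h: "has_pd i g x"
  shows "pd i g x = 0"
proof -
  define d where "d = norm x - r"
  have d: "d > 0" using x by (simp add: d_def)
  have "((\<lambda>t. g (x + t *\<^sub>R axis i 1)) has_real_derivative 0) (at 0)"
  proof (rule has_field_derivative_transform_within_open[where f="\<lambda>_. 0" and S="ball 0 d"])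
    show "0 = g (x + t *\<^sub>R axis i 1)" if "t \<in> ball 0 d" for t
    proof (rule s[symmetric])
      have "norm (t *\<^sub>R axis i (1::real)) = \<bar>t\<bar>" by simp
      then have "norm x - \<bar>t\<bar> \<le> norm (x + t *\<^sub>R axis i 1)"
        by (metis norm_diff_ineq norm_minus_cancel diff_minus_eq_add)
      moreover have "\<bar>t\<bar> < d" using that by auto
      ultimately show "r < norm (x + t *\<^sub>R axis i 1)" by (simp add: d_def)
    qed
  qed (use d in auto)
  then show ?thesis using has_pdD[OF h] DERIV_unique by blast
qed

lemma norm_shift_ge:
  fixes x :: "real^'n::finite"
  shows "norm x - \<bar>t\<bar> \<le> norm (x + t *\<^sub>R axis i 1)"
proof -
  have "norm (t *\<^sub>R axis i (1::real)) = \<bar>t\<bar>" by simp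
  then show ?thesis by (metis norm_diff_ineq norm_minus_cancel diff_minus_eq_add)
qed

lemma int_pd_zero:
  fixes g :: "real^'n::finite \<Rightarrow> real"
  assumes c: "continuous_on UNIV g" and h: "\<And>x. has_pd i g x" and cp: "continuous_on UNIV (pd i g)"
    and s: "\<And>x. r < norm x \<Longrightarrow> g x = 0"
  shows "(\<integral>x. pd i g x \<partial>lebesgue) = 0"
proof -
  define e :: "real^'n" where "e = axis i 1"
  have "bounded (pd i g ` cball 0 r)"
    by (intro compact_imp_bounded compact_continuous_image continuous_on_subset[OF cp]) auto
  then obtain B0 where B0: "\<And>y. y \<in> pd i g ` cball 0 r \<Longrightarrow> norm y \<le> B0" by (auto simp: bounded_iff)
  define B where "B = max B0 0"
  have B: "\<bar>pd i g x\<bar> \<le> B" for x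
  proof (cases "norm x \<le> r")
    case True then show ?thesis using B0[of "pd i g x"] by (auto simp: B_def)
  next
    case False then show ?thesis using pd_vanish[OF s _ h[of x]] by (auto simp: B_def)
  qed
  define hn where "hn n = 1 / real (Suc n)" for n
  have hn_pos: "hn n > 0" for n by (simp add: hn_def)
  have hn_le: "hn n \<le> 1" for n by (simp add: hn_def)
  define D where "D n x = (g (x + hn n *\<^sub>R e) - g x) / hn n" for n x
  have cshift: "continuous_on UNIV (\<lambda>x. g (x + a))" for a
    by (intro continuous_on_compose2[OF c] continuous_intros) auto
  have cD: "continuous_on UNIV (D n)" for n
    unfolding D_def using hn_pos[of n] by (intro continuous_intros cshift c) simp
  have sshift: "g (x + a) = 0" if "r + norm a < norm x" for x a
  proof (rule s)
    have "norm x \<le> norm (x + a) + norm a" by (metis add_diff_cancel norm_triangle_ineq4)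
    then show "r < norm (x + a)" using that by simp
  qed
  have iD: "(\<integral>x. D n x \<partial>lebesgue) = 0" for n
  proof -
    have i1: "integrable lebesgue (\<lambda>x. g (x + hn n *\<^sub>R e))"
      by (rule int_cont_supp[OF cshift, of "r + norm (hn n *\<^sub>R e)"]) (rule sshift)
    have i2: "integrable lebesgue g" by (rule int_cont_supp[OF c s])
    have "(\<integral>x. D n x \<partial>lebesgue) = ((\<integral>x. g (x + hn n *\<^sub>R e) \<partial>lebesgue) - (\<integral>x. g x \<partial>lebesgue)) / hn n"
      unfolding D_def by (simp add: Bochner_Integration.integral_diff[OF i1 i2])
    also have "(\<integral>x. g (x + hn n *\<^sub>R e) \<partial>lebesgue) = (\<integral>x. g x \<partial>lebesgue)"
      using lebesgue_translate[OF c, of "hn n *\<^sub>R e"] by (simp add: add.commute)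
    finally show ?thesis by simp
  qed
  have lim: "(\<lambda>n. D n x) \<longlonglongrightarrow> pd i g x" for x
  proof -
    have d: "((\<lambda>t. g (x + t *\<^sub>R e)) has_real_derivative pd i g x) (at 0)"
      unfolding e_def by (rule has_pdD[OF h])
    then have "((\<lambda>t. (g (x + (0 + t) *\<^sub>R e) - g (x + 0 *\<^sub>R e)) / t) \<longlongrightarrow> pd i g x) (at 0)"
      unfolding DERIV_def by simp
    then have l: "((\<lambda>t. (g (x + t *\<^sub>R e) - g x) / t) \<longlongrightarrow> pd i g x) (at 0)" by simp
    have f: "filterlim hn (at 0) sequentially"
    proof (rule filterlim_atI)
      show "hn \<longlonglongrightarrow> 0" unfolding hn_def
        using LIMSEQ_inverse_real_of_nat by (simp add: inverse_eq_divide)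
      show "\<forall>\<^sub>F n in sequentially. hn n \<noteq> 0" using hn_pos by (simp add: less_imp_neq[symmetric])
    qed
    show ?thesis using filterlim_compose[OF l f] unfolding D_def by simp
  qed
  have bound: "\<bar>D n x\<bar> \<le> B * indicator (cball 0 (r + 1)) x" for n x
  proof (cases "norm x \<le> r + 1")
    case False
    have "g x = 0" using False by (intro s) simp
    moreover have "g (x + hn n *\<^sub>R e) = 0"
      using False norm_shift_ge[of x "hn n" i] hn_le[of n] hn_pos[of n] unfolding e_def
      by (intro s) simp
    ultimately show ?thesis using False by (simp add: D_def)
  next
    case True
    obtain z where "0 < z" "z < hn n"
      and mvt: "g (x + hn n *\<^sub>R e) - g (x + 0 *\<^sub>R e) = (hn n - 0) * pd i g (x + z *\<^sub>R e)"
      using MVT2[of 0 "hn n" "\<lambda>t. g (x + t *\<^sub>R e)" "\<lambda>t. pd i g (x + t *\<^sub>R e)"] hn_pos[of n]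
        pd_line_deriv[OF h] unfolding e_def by blast
    have "D n x = pd i g (x + z *\<^sub>R e)" using mvt hn_pos[of n] by (simp add: D_def)
    then show ?thesis using B True by simp
  qed
  have iB: "integrable lebesgue (\<lambda>x. B * indicator (cball (0::real^'n) (r + 1)) x)"
    by (intro integrable_mult_right integrable_real_indicator) (auto intro!: emeasure_bounded_finite[simplified])
  have "(\<lambda>n. \<integral>x. D n x \<partial>lebesgue) \<longlonglongrightarrow> (\<integral>x. pd i g x \<partial>lebesgue)"
  proof (rule integral_dominated_convergence[OF _ _ iB])
    show "pd i g \<in> borel_measurable lebesgue" by (rule cont_meas[OF cp])
    show "D n \<in> borel_measurable lebesgue" for n by (rule cont_meas[OF cD])
    show "AE x in lebesgue. (\<lambda>n. D n x) \<longlonglongrightarrow> pd i g x" using lim by simp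
    show "AE x in lebesgue. norm (D n x) \<le> B * indicator (cball 0 (r + 1)) x" for n
      using bound by simp
  qed
  then show ?thesis using iD by (simp add: LIMSEQ_const_iff)
qed


lemma pd_loc0:
  fixes g :: "real^'n::finite \<Rightarrow> real"
  assumes e: "e > 0" and z: "\<And>y. y \<in> ball x e \<Longrightarrow> g y = 0" and h: "has_pd i g x"
  shows "pd i g x = 0"
proof -
  have "((\<lambda>t. g (x + t *\<^sub>R axis i 1)) has_real_derivative 0) (at 0)"
  proof (rule has_field_derivative_transform_within_open[where f="\<lambda>_. 0" and S="ball 0 e"])
    show "0 = g (x + t *\<^sub>R axis i 1)" if "t \<in> ball 0 e" for t
      using that by (intro z[symmetric]) (auto simp: dist_norm)
  qed (use e in auto)
  then show ?thesis using has_pdD[OF h] DERIV_unique by blast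
qed

lemma pds_append: "pds (is @ js) f = pds is (pds js f)"
  by (induction "is") auto

lemma pds_snoc: "pds is (pd i f) = pds (is @ [i]) f"
  by (simp add: pds_append)

lemma test_props:
  assumes "test_fun \<phi>"
  shows "continuous_on UNIV \<phi>" "\<And>i x. has_pd i \<phi> x" "\<And>i. continuous_on UNIV (pd i \<phi>)"
    "\<exists>r. \<forall>x. r < norm x \<longrightarrow> \<phi> x = 0"
proof -
  have s: "smooth \<phi>" and c: "compact (closure {x. \<phi> x \<noteq> 0})" using assms unfolding test_fun_def by blast+
  have s1: "\<And>js. continuous_on UNIV (pds js \<phi>)" and s2: "\<And>js i x. has_pd i (pds js \<phi>) x"
    using s unfolding smooth_def by blast+
  show "continuous_on UNIV \<phi>" using s1[where js="[]"] by simp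
  show "\<And>i x. has_pd i \<phi> x" using s2[where js="[]"] by simp
  show "\<And>i. continuous_on UNIV (pd i \<phi>)" using s1[where js="[i]" for i] by simp
  obtain r where "\<forall>x\<in>closure {x. \<phi> x \<noteq> 0}. norm x \<le> r"
    using compact_imp_bounded[OF c] by (auto simp: bounded_iff)
  then have r: "\<And>y. y \<in> closure {x. \<phi> x \<noteq> 0} \<Longrightarrow> norm y \<le> r" by blast
  have "\<phi> x = 0" if x: "r < norm x" for x
    proof (rule ccontr)
      assume "\<phi> x \<noteq> 0"
      then have "x \<in> closure {x. \<phi> x \<noteq> 0}" by (intro closure_subset[THEN subsetD]) simp
      then show False using r[of x] x by simp
    qed
  then show "\<exists>r. \<forall>x. r < norm x \<longrightarrow> \<phi> x = 0" by blast
qed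

lemma test_pd:
  assumes "test_fun \<phi>"
  shows "test_fun (pd i \<phi>)"
proof -
  have s: "smooth \<phi>" and c: "compact (closure {x. \<phi> x \<noteq> 0})" using assms unfolding test_fun_def by blast+
  have sm: "smooth (pd i \<phi>)"
    using s unfolding smooth_def pds_snoc by blast
  have "{x. pd i \<phi> x \<noteq> 0} \<subseteq> closure {x. \<phi> x \<noteq> 0}"
  proof
    fix x assume x: "x \<in> {x. pd i \<phi> x \<noteq> 0}"
    show "x \<in> closure {x. \<phi> x \<noteq> 0}"
    proof (rule ccontr)
      assume "x \<notin> closure {x. \<phi> x \<noteq> 0}"
      then obtain e where e: "e > 0" "\<And>y. \<phi> y \<noteq> 0 \<Longrightarrow> \<not> dist y x < e"
        unfolding closure_approachable by auto
      have "pd i \<phi> x = 0"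
      proof (rule pd_loc0[OF e(1)])
        show "\<phi> y = 0" if "y \<in> ball x e" for y using e(2)[of y] that by (auto simp: dist_commute)
        show "has_pd i \<phi> x" using test_props(2)[OF assms] .
      qed
      then show False using x by simp
    qed
  qed
  then have "bounded {x. pd i \<phi> x \<noteq> 0}"
    by (rule bounded_subset[OF compact_imp_bounded[OF c]])
  then have "compact (closure {x. pd i \<phi> x \<noteq> 0})"
    using compact_closure by blast
  then show ?thesis unfolding test_fun_def using sm by blast
qed


lemma ibp:
  fixes f \<phi> :: "real^'n::finite \<Rightarrow> real"
  assumes cf: "continuous_on UNIV f" and hf: "\<And>x. has_pd i f x" and cpf: "continuous_on UNIV (pd i f)"
    and t: "test_fun \<phi>"
  shows "integrable lebesgue (\<lambda>x. f x * pd i \<phi> x)" "integrable lebesgue (\<lambda>x. pd i f x * \<phi> x)"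
    "(\<integral>x. f x * pd i \<phi> x \<partial>lebesgue) = - (\<integral>x. pd i f x * \<phi> x \<partial>lebesgue)"
proof -
  obtain r where r: "\<And>x. r < norm x \<Longrightarrow> \<phi> x = 0" using test_props(4)[OF t] by blast
  note c\<phi> = test_props(1)[OF t] and h\<phi> = test_props(2)[OF t] and cp\<phi> = test_props(3)[OF t]
  have pr: "pd i \<phi> x = 0" if "r < norm x" for x by (rule pd_vanish[OF r that h\<phi>])
  show i1: "integrable lebesgue (\<lambda>x. f x * pd i \<phi> x)"
    by (rule int_cont_supp[where r=r]) (auto intro!: continuous_on_mult cf cp\<phi> simp: pr)
  show i2: "integrable lebesgue (\<lambda>x. pd i f x * \<phi> x)"
    by (rule int_cont_supp[where r=r]) (auto intro!: continuous_on_mult cpf c\<phi> simp: r)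
  have e: "pd i (\<lambda>x. f x * \<phi> x) = (\<lambda>x. pd i f x * \<phi> x + f x * pd i \<phi> x)"
    by (rule ext, rule pd_mult(2)[OF hf h\<phi>])
  have "(\<integral>x. pd i (\<lambda>x. f x * \<phi> x) x \<partial>lebesgue) = 0"
  proof (rule int_pd_zero[where r=r])
    show "continuous_on UNIV (\<lambda>x. f x * \<phi> x)" by (intro continuous_on_mult cf c\<phi>)
    show "has_pd i (\<lambda>x. f x * \<phi> x) x" for x by (rule pd_mult(1)[OF hf h\<phi>])
    show "continuous_on UNIV (pd i (\<lambda>x. f x * \<phi> x))" unfolding e
      by (intro continuous_on_add continuous_on_mult cf c\<phi> cpf cp\<phi>)
    show "f x * \<phi> x = 0" if "r < norm x" for x using r[OF that] by simp
  qed
  then have "(\<integral>x. pd i f x * \<phi> x \<partial>lebesgue) + (\<integral>x. f x * pd i \<phi> x \<partial>lebesgue) = 0"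
    unfolding e by (simp add: Bochner_Integration.integral_add[OF i2 i1])
  then show "(\<integral>x. f x * pd i \<phi> x \<partial>lebesgue) = - (\<integral>x. pd i f x * \<phi> x \<partial>lebesgue)" by simp
qed

definition linf :: "real \<Rightarrow> 'n::finite \<Rightarrow> real \<Rightarrow> real^'n \<Rightarrow> real" where
  "linf c j d x = c * (x $ j) + d"

lemma linf_Acl: "linf c j d \<in> Acl"
proof -
  have "(\<lambda>x. (\<lambda>x. c) x * (\<lambda>x. x $ j) x + (\<lambda>x. d) x) \<in> Acl"
    by (intro Acl.add Acl.mult Acl.const Acl.proj)
  then show ?thesis unfolding linf_def[abs_def] by simp
qed

definition bump :: "real \<Rightarrow> real^'n::finite \<Rightarrow> real^'n \<Rightarrow> real^'n \<Rightarrow> real" where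
  "bump n a b x = (\<Prod>j\<in>UNIV. Fp 1 (n * (x $ j - a $ j)) * Fp 1 (n * (b $ j - x $ j)))"

lemma bump_Acl: "bump n a b \<in> Acl"
proof -
  have "(\<lambda>x. \<Prod>j\<in>UNIV. (\<lambda>j x. Fp 1 (linf n j (- n * a $ j) x) * Fp 1 (linf (-n) j (n * b $ j) x)) j x) \<in> Acl"
    by (intro Acl_prod Acl.mult Acl.comp linf_Acl) auto
  moreover have "linf n j (- n * a $ j) x = n * (x $ j - a $ j)" "linf (-n) j (n * b $ j) x = n * (b $ j - x $ j)" for j x
    by (simp_all add: linf_def algebra_simps)
  ultimately show ?thesis unfolding bump_def[abs_def] by simp
qed

lemma bump_zero: "n > 0 \<Longrightarrow> x \<notin> box a b \<Longrightarrow> bump n a b x = 0"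
proof -
  assume n: "n > 0" and x: "x \<notin> box a b"
  then obtain j where "\<not> (a $ j < x $ j \<and> x $ j < b $ j)" by (auto simp: mem_box_cart)
  then have "Fp 1 (n * (x $ j - a $ j)) * Fp 1 (n * (b $ j - x $ j)) = 0"
    using n by (auto simp: Fp1_zero mult_nonneg_nonpos not_less)
  then show ?thesis unfolding bump_def by (intro prod_zero) auto
qed

lemma bump_bounds: "0 \<le> bump n a b x" "bump n a b x \<le> 1"
  unfolding bump_def
  by (auto intro!: prod_nonneg prod_le_1 mult_nonneg_nonneg mult_le_one Fp1_nonneg Fp1_le1)

lemma bump_test: "n > 0 \<Longrightarrow> test_fun (bump n a b)"
proof -
  assume n: "n > 0"
  have "{x. bump n a b x \<noteq> 0} \<subseteq> cbox a b" using bump_zero[OF n] box_subset_cbox by blast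
  then have "bounded {x. bump n a b x \<noteq> 0}" by (rule bounded_subset[OF bounded_cbox])
  then have "compact (closure {x. bump n a b x \<noteq> 0})" using compact_closure by blast
  then show ?thesis unfolding test_fun_def using Acl_smooth[OF bump_Acl] by blast
qed


lemma fund_cbox:
  fixes w :: "real^'n::finite \<Rightarrow> real"
  assumes wm[measurable]: "w \<in> borel_measurable lebesgue"
    and int: "\<And>\<psi>. test_fun \<psi> \<Longrightarrow> integrable lebesgue (\<lambda>x. w x * \<psi> x)"
  shows "integrable lebesgue (\<lambda>x. w x * indicator (cbox a b) x)"
proof -
  define one :: "real^'n" where "one = (\<chi> j. 1)"
  define \<psi> where "\<psi> = bump 1 (a - one) (b + one)"
  define c where "c = (Fp 1 1 * Fp 1 1) ^ CARD('n)"
  have c: "c > 0" unfolding c_def by (simp add: Fp1_pos)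
  have low: "c \<le> \<psi> x" if x: "x \<in> cbox a b" for x
  proof -
    have "c = (\<Prod>j\<in>(UNIV::'n set). Fp 1 1 * Fp 1 1)" by (simp add: c_def)
    also have "\<dots> \<le> \<psi> x" unfolding \<psi>_def bump_def
    proof (rule prod_mono)
      fix j :: 'n
      have "a $ j \<le> x $ j" "x $ j \<le> b $ j" using x by (auto simp: mem_box_cart)
      then show "0 \<le> Fp 1 1 * Fp 1 1 \<and> Fp 1 1 * Fp 1 1 \<le> Fp 1 (1 * (x $ j - (a - one) $ j)) * Fp 1 (1 * ((b + one) $ j - x $ j))"
        by (auto simp: one_def intro!: mult_mono Fp1_mono Fp1_nonneg)
    qed
    finally show ?thesis .
  qed
  have t: "test_fun \<psi>" unfolding \<psi>_def by (rule bump_test) simp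
  have "integrable lebesgue (\<lambda>x. w x * \<psi> x / c)" using int[OF t] by simp
  then show ?thesis
  proof (rule Bochner_Integration.integrable_bound)
    show "(\<lambda>x. w x * indicator (cbox a b) x) \<in> borel_measurable lebesgue"
      by (intro borel_measurable_times wm borel_measurable_indicator) simp
    show "AE x in lebesgue. norm (w x * indicator (cbox a b) x) \<le> norm (w x * \<psi> x / c)"
    proof (rule AE_I2)
      fix x
      show "norm (w x * indicator (cbox a b) x) \<le> norm (w x * \<psi> x / c)"
      proof (cases "x \<in> cbox a b")
        case True
        have "1 \<le> \<psi> x / c" using low[OF True] c by simp
        then have "\<bar>w x\<bar> * 1 \<le> \<bar>w x\<bar> * (\<psi> x / c)" by (intro mult_left_mono) auto
        then show ?thesis using True c low[OF True] by (simp add: abs_mult)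
      qed simp
    qed
  qed
qed

lemma bump_lim:
  fixes a b x :: "real^'n::finite"
  shows "(\<lambda>n. bump (real (Suc n)) a b x) \<longlonglongrightarrow> indicator (box a b) x"
proof (cases "x \<in> box a b")
  case True
  then have ab: "a $ j < x $ j" "x $ j < b $ j" for j by (auto simp: mem_box_cart)
  have "(\<lambda>n. \<Prod>j\<in>UNIV. Fp 1 (real (Suc n) * (x $ j - a $ j)) * Fp 1 (real (Suc n) * (b $ j - x $ j)))
      \<longlonglongrightarrow> (\<Prod>j\<in>(UNIV::'n set). 1 * 1)"
    using ab by (intro tendsto_prod tendsto_mult Fp1_lim) auto
  then show ?thesis using True unfolding bump_def by simp
next
  case False
  then show ?thesis using bump_zero[OF _ False] by simp
qed

lemma fund_box:
  fixes w :: "real^'n::finite \<Rightarrow> real"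
  assumes wm[measurable]: "w \<in> borel_measurable lebesgue"
    and int: "\<And>\<psi>. test_fun \<psi> \<Longrightarrow> integrable lebesgue (\<lambda>x. w x * \<psi> x)"
    and z: "\<And>\<psi>. test_fun \<psi> \<Longrightarrow> (\<integral>x. w x * \<psi> x \<partial>lebesgue) = 0"
  shows "(\<integral>x. w x * indicator (box a b) x \<partial>lebesgue) = 0"
proof -
  have ic: "integrable lebesgue (\<lambda>x. \<bar>w x * indicator (cbox a b) x\<bar>)"
    by (rule integrable_abs[OF fund_cbox[OF wm int]])
  have "(\<lambda>n. \<integral>x. w x * bump (real (Suc n)) a b x \<partial>lebesgue) \<longlonglongrightarrow> (\<integral>x. w x * indicator (box a b) x \<partial>lebesgue)"
  proof (rule integral_dominated_convergence[OF _ _ ic])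
    show "(\<lambda>x. w x * indicator (box a b) x) \<in> borel_measurable lebesgue"
      by (intro borel_measurable_times wm borel_measurable_indicator) simp
    show "(\<lambda>x. w x * bump (real (Suc n)) a b x) \<in> borel_measurable lebesgue" for n
      by (intro borel_measurable_times wm cont_meas Acl_props[OF bump_Acl, THEN conjunct1])
    show "AE x in lebesgue. (\<lambda>n. w x * bump (real (Suc n)) a b x) \<longlonglongrightarrow> w x * indicator (box a b) x"
      by (intro AE_I2 tendsto_mult tendsto_const bump_lim)
    show "AE x in lebesgue. norm (w x * bump (real (Suc n)) a b x) \<le> \<bar>w x * indicator (cbox a b) x\<bar>" for n
    proof (rule AE_I2)
      fix x
      show "norm (w x * bump (real (Suc n)) a b x) \<le> \<bar>w x * indicator (cbox a b) x\<bar>"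
      proof (cases "x \<in> box a b")
        case True
        then have "x \<in> cbox a b" using box_subset_cbox by blast
        moreover have "\<bar>w x\<bar> * bump (real (Suc n)) a b x \<le> \<bar>w x\<bar> * 1"
          by (intro mult_left_mono bump_bounds) auto
        ultimately show ?thesis using bump_bounds(1)[of "real (Suc n)" a b x] by (simp add: abs_mult)
      next
        case False
        then show ?thesis using bump_zero[OF _ False] by simp
      qed
    qed
  qed
  moreover have "(\<integral>x. w x * bump (real (Suc n)) a b x \<partial>lebesgue) = 0" for n
    by (rule z[OF bump_test]) simp
  ultimately show ?thesis by (simp add: LIMSEQ_const_iff)
qed

lemma Int_stable_box: "Int_stable (range (\<lambda>(a, b). box a b :: 'a::euclidean_space set))"
  unfolding Int_stable_def by (auto simp: box_Int_box)

lemma fund: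
  fixes w :: "real^'n::finite \<Rightarrow> real"
  assumes wm[measurable]: "w \<in> borel_measurable lebesgue"
    and int: "\<And>\<psi>. test_fun \<psi> \<Longrightarrow> integrable lebesgue (\<lambda>x. w x * \<psi> x)"
    and z: "\<And>\<psi>. test_fun \<psi> \<Longrightarrow> (\<integral>x. w x * \<psi> x \<partial>lebesgue) = 0"
  shows "AE x in lebesgue. w x = 0"
proof -
  have fb: "(\<integral>x. w x * indicator (box a b) x \<partial>lebesgue) = 0" for a b
    by (rule fund_box[OF wm int z])
  have loc: "AE x in lebesgue. indicator (box c d) x * w x = 0" for c d :: "real^'n"
  proof -
    define f where "f x = indicator (box c d) x * w x" for x
    have fm[measurable]: "f \<in> borel_measurable lebesgue"
      unfolding f_def by (intro borel_measurable_times wm borel_measurable_indicator) simp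
    have fi: "integrable lebesgue f"
    proof (rule Bochner_Integration.integrable_bound[OF fund_cbox[OF wm int, of c d] fm])
      show "AE x in lebesgue. norm (f x) \<le> norm (w x * indicator (cbox c d) x)"
        using box_subset_cbox[of c d] by (intro AE_I2) (auto simp: f_def indicator_def)
    qed
    have fA: "integrable lebesgue (\<lambda>x. indicator A x *\<^sub>R f x)" if "A \<in> sets lebesgue" for A
      by (rule integrable_mult_indicator[OF that fi])
    have f0: "(\<integral>x. f x \<partial>lebesgue) = 0" using fb[of c d] by (simp add: f_def mult.commute)
    have bor: "(\<integral>x. indicator A x *\<^sub>R f x \<partial>lebesgue) = 0" if "A \<in> sets borel" for A
    proof -
      have "A \<in> sigma_sets UNIV (range (\<lambda>(a, b). box a b))" using that unfolding borel_eq_box by simp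
      with Int_stable_box have "Int_stable (range (\<lambda>(a, b). box a b :: (real^'n) set))"
        "range (\<lambda>(a, b). box a b :: (real^'n) set) \<subseteq> Pow UNIV"
        "A \<in> sigma_sets UNIV (range (\<lambda>(a, b). box a b))" by auto
      then show ?thesis
      proof (induction rule: sigma_sets_induct_disjoint)
        case (basic A)
        then obtain a b where A: "A = box a b" by auto
        have "indicator A x *\<^sub>R f x = w x * indicator (box a b \<inter> box c d) x" for x
          by (simp add: A f_def indicator_def)
        then show ?case unfolding box_Int_box by (simp add: fb)
      next
        case empty show ?case by simp
      next
        case (compl A)
        have Al: "A \<in> sets lebesgue" using compl(1) unfolding sets_lborel[symmetric]
          by (metis borel_eq_box sets_completionI_sets sets_lborel sets_measure_of top_greatest Pow_UNIV)
        have "(\<lambda>x. indicator (UNIV - A) x *\<^sub>R f x) = (\<lambda>x. f x - indicator A x *\<^sub>R f x)"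
          by (auto simp: indicator_def)
        then show ?case using compl(2) f0 Bochner_Integration.integral_diff[OF fi fA[OF Al]] by simp
      next
        case (union A)
        have Al: "A i \<in> sets lebesgue" for i using union(2) unfolding sets_lborel[symmetric]
          by (metis borel_eq_box range_subsetD sets_completionI_sets sets_lborel sets_measure_of top_greatest Pow_UNIV)
        have "(LINT x:(\<Union>i. A i)|lebesgue. f x) = (\<Sum>i. (LINT x:(A i)|lebesgue. f x))"
        proof (rule lebesgue_integral_countable_add[OF Al])
          show "A i \<inter> A j = {}" if "i \<noteq> j" for i j using union(1) that by (auto simp: disjoint_family_on_def)
          show "set_integrable lebesgue (\<Union>i. A i) f" unfolding set_integrable_def
            using Al by (intro fA) auto
        qed
        then show ?case using union(3) by (simp add: set_lebesgue_integral_def)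
      qed
    qed
    have "set_lebesgue_integral lebesgue A f = 0" if A: "A \<in> sets lebesgue" for A
    proof -
      obtain S N N' where SN: "A = S \<union> N" "N \<subseteq> N'" "N' \<in> null_sets lborel" "S \<in> sets lborel"
        using sets_completionE[OF A] by blast
      have Sl: "S \<in> sets lebesgue" using SN(4) by simp
      have "AE x in lebesgue. x \<notin> N'"
        using SN(3) by (intro AE_completion AE_not_in)
      then have "AE x in lebesgue. indicator A x *\<^sub>R f x = indicator S x *\<^sub>R f x"
        by eventually_elim (use SN(1,2) in \<open>auto simp: indicator_def\<close>)
      then have "(\<integral>x. indicator A x *\<^sub>R f x \<partial>lebesgue) = (\<integral>x. indicator S x *\<^sub>R f x \<partial>lebesgue)"
        by (intro integral_cong_AE) (use A Sl in \<open>auto intro!: borel_measurable_scaleR borel_measurable_indicator fm\<close>)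
      also have "\<dots> = 0" using bor SN(4) by simp
      finally show ?thesis by (simp add: set_lebesgue_integral_def)
    qed
    then have "AE x in lebesgue. f x = (\<lambda>x. 0) x"
      by (intro density_unique_real[OF fi integrable_zero]) (simp add: set_lebesgue_integral_def)
    then show ?thesis by (simp add: f_def)
  qed
  define B :: "nat \<Rightarrow> (real^'n) set" where "B n = box (- (\<chi> j. real n)) (\<chi> j. real n)" for n
  have "AE x in lebesgue. \<forall>n. indicator (B n) x * w x = 0"
    unfolding AE_all_countable B_def using loc by blast
  then show ?thesis
  proof eventually_elim
    case (elim x)
    obtain n where n: "norm x < real n" using reals_Archimedean2 by blast
    have "x \<in> B n"
      unfolding B_def mem_box_cart
    proof (intro allI conjI)
      fix i have "\<bar>x $ i\<bar> < real n" using component_le_norm_cart[of x i] n by linarith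
      then show "(- (\<chi> j. real n)) $ i < x $ i" "x $ i < (\<chi> j. real n) $ i" by auto
    qed
    then show ?case using elim[rule_format, of n] by simp
  qed
qed


lemma j1: assumes k: "(k::real) > 0" shows "sqrt (1 - k * (1/(3*k))) = 1/(3* sqrt(2*k)* sqrt(1/(3*k))) + sqrt(1/6)"
proof -
  have a: "sqrt(2*k)* sqrt(1/(3*k)) = sqrt (2/3)" using k by (simp add: real_sqrt_mult[symmetric])
  have b: "1 - k * (1/(3*k)) = 2/3" using k by simp
  have c: "sqrt (1/6) = 1/(3* sqrt(2/3))"
    by (rule real_sqrt_unique) (auto simp: power_divide power_mult_distrib)
  have d: "sqrt (2/3) = 2 * sqrt(1/6)"
    by (rule real_sqrt_unique) (auto simp: power_mult_distrib)
  show ?thesis unfolding b mult.assoc a using c d by simp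
qed

lemma j2: assumes k: "(k::real) > 0" shows "-k/(2* sqrt(1 - k * (1/(3*k)))) = -1/(6* sqrt(2*k)*(1/(3*k))* sqrt(1/(3*k)))"
proof -
  have a: "sqrt(2*k)* sqrt(1/(3*k)) = sqrt (2/3)" using k by (simp add: real_sqrt_mult[symmetric])
  have b: "1 - k * (1/(3*k)) = 2/3" using k by simp
  have "6* sqrt(2*k)*(1/(3*k))* sqrt(1/(3*k)) = 2 * sqrt (2/3) / k" using a k by (simp add: field_simps)
  then show ?thesis unfolding b using k by (simp add: field_simps)
qed

definition pA :: "real \<Rightarrow> real \<Rightarrow> real" where "pA k s = sqrt (1 - k * s)"
definition pAd :: "real \<Rightarrow> real \<Rightarrow> real" where "pAd k s = -k/(2* sqrt(1 - k * s))"
definition pB :: "real \<Rightarrow> real \<Rightarrow> real" where "pB k s = 1/(3* sqrt(2*k)* sqrt s) + sqrt(1/6)"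
definition pBd :: "real \<Rightarrow> real \<Rightarrow> real" where "pBd k s = -1/(6* sqrt(2*k)* s* sqrt s)"

definition phi :: "real \<Rightarrow> real \<Rightarrow> real" where
  "phi k s = (if s < 1/(3*k) then pA k s else pB k s)"
definition phid :: "real \<Rightarrow> real \<Rightarrow> real" where
  "phid k s = (if s < 1/(3*k) then pAd k s else pBd k s)"

lemma pA_deriv: "k > 0 \<Longrightarrow> s < 1/k \<Longrightarrow> (pA k has_real_derivative pAd k s) (at s within S)"
  unfolding pA_def[abs_def] pAd_def
  by (rule derivative_eq_intros refl | simp add: field_simps)+

lemma pB_deriv: "k > 0 \<Longrightarrow> s > 0 \<Longrightarrow> (pB k has_real_derivative pBd k s) (at s within S)"
  unfolding pB_def[abs_def] pBd_def
  by (rule derivative_eq_intros refl | simp add: field_simps power2_eq_square)+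

lemma phi_deriv:
  assumes k: "k > 0"
  shows "(phi k has_real_derivative phid k s) (at s)"
proof -
  define s0 where "s0 = 1/(3*k)"
  have s0: "0 < s0" "s0 < 1/k" using k by (auto simp: s0_def field_simps)
  have cl: "closure {..<s0} = {..s0}" "closure {s0..} = {s0..}" by auto
  have i: "{..<s0} \<union> (closure {..<s0} \<inter> closure {s0..}) = {..s0}"
          "{s0..} \<union> (closure {..<s0} \<inter> closure {s0..}) = {s0..}" unfolding cl by auto
  have "((\<lambda>x. if x \<in> {..<s0} then pA k x else pB k x) has_derivative
      (if s \<in> {..<s0} then (*) (pAd k s) else (*) (pBd k s))) (at s within ({..<s0} \<union> {s0..}))"
  proof (rule has_derivative_If_within_closures)
    show "(pA k has_derivative (*) (pAd k s)) (at s within {..<s0} \<union> (closure {..<s0} \<inter> closure {s0..}))"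
      if "s \<in> {..<s0} \<union> (closure {..<s0} \<inter> closure {s0..})"
      using that s0 unfolding i by (intro pA_deriv[OF k, unfolded has_field_derivative_def]) auto
    show "(pB k has_derivative (*) (pBd k s)) (at s within {s0..} \<union> (closure {..<s0} \<inter> closure {s0..}))"
      if "s \<in> {s0..} \<union> (closure {..<s0} \<inter> closure {s0..})"
      using that s0 unfolding i by (intro pB_deriv[OF k, unfolded has_field_derivative_def]) auto
    show "pA k s = pB k s" if "s \<in> closure {..<s0}" "s \<in> closure {s0..}"
      using that j1[OF k] unfolding cl by (auto simp: pA_def pB_def s0_def)
    show "(*) (pAd k s) = (*) (pBd k s)" if "s \<in> closure {..<s0}" "s \<in> closure {s0..}"
      using that j2[OF k] unfolding cl by (auto simp: pAd_def pBd_def s0_def)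
  qed auto
  moreover have "{..<s0} \<union> {s0..} = UNIV" by auto
  moreover have "(\<lambda>x. if x \<in> {..<s0} then pA k x else pB k x) = phi k"
    by (rule ext) (simp add: phi_def s0_def)
  moreover have "(if s \<in> {..<s0} then (*) (pAd k s) else (*) (pBd k s)) = (*) (phid k s)"
    by (simp add: phid_def s0_def)
  ultimately show ?thesis by (simp add: has_field_derivative_def)
qed

lemma phid_cont:
  assumes k: "k > 0"
  shows "continuous_on UNIV (phid k)"
proof -
  define s0 where "s0 = 1/(3*k)"
  have s0: "0 < s0" "s0 < 1/k" using k by (auto simp: s0_def field_simps)
  have "continuous_on ({..s0} \<union> {s0..}) (phid k)"
  proof (rule continuous_on_closed_Un)
    have "continuous_on {..s0} (pAd k)"
    proof -
      have "1 - k * x > 0" if "x \<le> s0" for x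
        using that s0 k by (smt (verit) mult_le_cancel_left_pos pos_less_divide_eq mult.commute)
      then have "2 * sqrt (1 - k * x) \<noteq> 0" if "x \<in> {..s0}" for x using that by force
      then show ?thesis unfolding pAd_def[abs_def] by (intro continuous_intros) auto
    qed
    moreover have "pAd k x = phid k x" if "x \<in> {..s0}" for x
      using that j2[OF k] by (cases "x = s0") (auto simp: phid_def pAd_def pBd_def s0_def)
    ultimately show "continuous_on {..s0} (phid k)" using continuous_on_cong by blast
    have "continuous_on {s0..} (pBd k)"
      unfolding pBd_def[abs_def] using s0 k by (intro continuous_intros) auto
    moreover have "pBd k x = phid k x" if "x \<in> {s0..}" for x
      using that by (auto simp: phid_def s0_def)
    ultimately show "continuous_on {s0..} (phid k)" using continuous_on_cong by blast
  qed auto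
  moreover have "{..s0} \<union> {s0..} = UNIV" by auto
  ultimately show ?thesis by simp
qed

definition gd :: "real \<Rightarrow> real \<Rightarrow> real" where "gd k t = phid k (t^2) * (2 * t)"

lemma gk_phi: "k > 0 \<Longrightarrow> gk k t = phi k (t^2)"
proof -
  assume k: "k > 0"
  have eq: "(\<bar>t\<bar> < sqrt (1 / (3 * k))) = (t^2 < 1/(3*k))"
    by (metis real_sqrt_abs real_sqrt_less_iff)
  show ?thesis
    unfolding gk_def phi_def pA_def pB_def real_sqrt_abs eq ..
qed

lemma gk_deriv: "k > 0 \<Longrightarrow> (gk k has_real_derivative gd k t) (at t)"
proof -
  assume k: "k > 0"
  have "((\<lambda>t. phi k (t^2)) has_real_derivative phid k (t^2) * (2 * t)) (at t)"
  proof (rule DERIV_chain2[OF phi_deriv[OF k]])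
    show "((\<lambda>t. t^2) has_real_derivative 2 * t) (at t)"
      by (rule derivative_eq_intros refl | simp)+
  qed
  moreover have "gk k = (\<lambda>t. phi k (t^2))" using gk_phi[OF k] by auto
  ultimately show ?thesis by (simp add: gd_def)
qed

lemma gd_cont: "k > 0 \<Longrightarrow> continuous_on UNIV (gd k)"
  unfolding gd_def[abs_def]
  by (intro continuous_intros continuous_on_compose2[OF phid_cont]) auto

lemma gk_cont: "k > 0 \<Longrightarrow> continuous_on S (gk k)"
  by (intro continuous_at_imp_continuous_on ballI DERIV_isCont[OF gk_deriv])

lemma gk_lower: "k > 0 \<Longrightarrow> sqrt (1/6) < gk k t"
proof -
  assume k: "k > 0"
  show ?thesis
  proof (cases "t^2 < 1/(3*k)")
    case True
    then have "k * t^2 < 1/3" using k by (simp add: field_simps)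
    then have "1/6 < 1 - k * t^2" by simp
    then show ?thesis using True k by (simp add: gk_phi phi_def pA_def)
  next
    case False
    have "0 < 1/(3*k)" using k by simp
    then have "t^2 > 0" using False by linarith
    then have "0 < 1/(3 * sqrt(2*k) * sqrt(t^2))" using k by simp
    moreover have "gk k t = 1/(3 * sqrt(2*k) * sqrt(t^2)) + sqrt(1/6)"
      using False k by (simp only: gk_phi phi_def pB_def if_False)
    ultimately show ?thesis by linarith
  qed
qed

lemma gk_pos: "k > 0 \<Longrightarrow> 0 < gk k t"
  using gk_lower[of k t] real_sqrt_ge_zero[of "1/6"] by linarith

lemma deriv_gk: "k > 0 \<Longrightarrow> deriv (gk k) t = gd k t"
  by (rule DERIV_imp_deriv[OF gk_deriv])


context
  fixes k :: real
  assumes k: "k > 0"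
begin

lemma Gk_deriv: "(Gk k has_real_derivative gk k t) (at t)"
proof -
  define a where "a = - \<bar>t\<bar> - 1"
  define b where "b = \<bar>t\<bar> + 1"
  have "((\<lambda>u. LBINT y=ereal 0..u. gk k y) has_vector_derivative gk k t) (at t within {a..b})"
    by (rule interval_integral_FTC2) (auto simp: a_def b_def gk_cont[OF k])
  then have "((\<lambda>u. LBINT y=0..u. gk k y) has_vector_derivative gk k t) (at t within {a..b})"
    by (simp add: zero_ereal_def)
  then have "((\<lambda>u. LBINT y=0..u. gk k y) has_vector_derivative gk k t) (at t within {a<..<b})"
    by (rule has_vector_derivative_within_subset) auto
  then have "((\<lambda>u. LBINT y=0..u. gk k y) has_vector_derivative gk k t) (at t)"
    by (subst (asm) has_vector_derivative_within_open) (auto simp: a_def b_def)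
  then show ?thesis
    by (simp add: has_real_derivative_iff_has_vector_derivative Gk_def[abs_def])
qed

lemma Gk_cont: "continuous_on S (Gk k)"
  by (intro continuous_at_imp_continuous_on ballI DERIV_isCont[OF Gk_deriv])

lemma Gk0: "Gk k 0 = 0"
  using interval_integral_endpoints_same[of 0 "gk k"] by (simp add: Gk_def zero_ereal_def)

lemma Gk_strict: "s < t \<Longrightarrow> Gk k s < Gk k t"
  by (rule DERIV_pos_imp_increasing[where f="Gk k"]) (auto intro!: exI conjI Gk_deriv gk_pos[OF k])

lemma Gk_inj: "inj (Gk k)"
  by (metis Gk_strict injI linorder_neqE_linordered_idom less_irrefl)

definition m6 where "m6 = sqrt (1/6::real)"

lemma m6_pos: "m6 > 0" by (simp add: m6_def)

lemma Gk_lower: "0 \<le> t \<Longrightarrow> m6 * t \<le> Gk k t"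
proof -
  assume t: "0 \<le> t"
  show ?thesis
  proof (cases "t = 0")
    case True then show ?thesis by (simp add: Gk0)
  next
    case False
    then have t: "0 < t" using t by simp
    obtain z where "0 < z" "z < t" and "Gk k t - Gk k 0 = (t - 0) * gk k z"
      using MVT2[OF t, of "Gk k" "gk k"] Gk_deriv by blast
    then have "Gk k t = t * gk k z" by (simp add: Gk0)
    moreover have "m6 < gk k z" using gk_lower[OF k] by (simp add: m6_def)
    ultimately show ?thesis using t by (simp add: mult_left_mono mult.commute)
  qed
qed

lemma Gk_upper: "t \<le> 0 \<Longrightarrow> Gk k t \<le> m6 * t"
proof -
  assume t: "t \<le> 0"
  show ?thesis
  proof (cases "t = 0")
    case True then show ?thesis by (simp add: Gk0)
  next
    case False
    then have t: "t < 0" using t by simp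
    obtain z where "t < z" "z < 0" and "Gk k 0 - Gk k t = (0 - t) * gk k z"
      using MVT2[OF t, of "Gk k" "gk k"] Gk_deriv by blast
    then have "Gk k t = t * gk k z" by (simp add: Gk0)
    moreover have "m6 < gk k z" using gk_lower[OF k] by (simp add: m6_def)
    ultimately show ?thesis using t by (simp add: mult_left_mono_neg mult.commute)
  qed
qed

lemma Gk_surj: "surj (Gk k)"
proof -
  have "\<exists>x. Gk k x = y" for y
  proof -
    define b where "b = \<bar>y\<bar> / m6"
    have b: "0 \<le> b" using m6_pos by (simp add: b_def)
    have "y \<le> Gk k b" using Gk_lower[OF b] m6_pos by (simp add: b_def)
    moreover have "Gk k (-b) \<le> y" using Gk_upper[of "-b"] b m6_pos by (simp add: b_def)
    ultimately show ?thesis using IVT'[of "Gk k" "-b" y b] b Gk_cont by auto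
  qed
  then show ?thesis by (metis surjI)
qed

lemma Ginv_G: "Ginvk k (Gk k t) = t"
  unfolding Ginvk_def using Gk_inj by (simp add: inv_f_f)

lemma G_Ginv: "Gk k (Ginvk k y) = y"
  unfolding Ginvk_def using Gk_surj by (simp add: surj_f_inv_f)

lemma Ginv0: "Ginvk k 0 = 0"
  using Ginv_G[of 0] by (simp add: Gk0)

lemma Ginv_cont_at: "isCont (Ginvk k) y"
proof -
  have "isCont (Ginvk k) (Gk k (Ginvk k y))"
    by (rule isCont_inverse_function[where d=1])
       (auto simp: Ginv_G intro: DERIV_isCont[OF Gk_deriv])
  then show ?thesis by (simp add: G_Ginv)
qed

lemma Ginv_cont: "continuous_on S (Ginvk k)"
  by (intro continuous_at_imp_continuous_on ballI Ginv_cont_at)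

lemma gk_nz: "gk k t \<noteq> 0"
  using gk_pos[OF k, of t] by simp

lemma Ginv_deriv: "(Ginvk k has_real_derivative 1 / gk k (Ginvk k y)) (at y)"
proof -
  have "(Ginvk k has_real_derivative inverse (gk k (Ginvk k y))) (at y)"
    by (rule DERIV_inverse_function[where f="Gk k" and g="Ginvk k" and a="y - 1" and b="y + 1", OF Gk_deriv])
       (simp_all add: G_Ginv Ginv_cont_at gk_nz)
  then show ?thesis by (simp add: inverse_eq_divide)
qed

lemma Ginv_bound: "\<bar>Ginvk k y\<bar> \<le> \<bar>y\<bar> / m6"
proof -
  define t where "t = Ginvk k y"
  have y: "y = Gk k t" by (simp add: t_def G_Ginv)
  have "m6 * \<bar>t\<bar> \<le> \<bar>Gk k t\<bar>"
    using Gk_lower[of t] Gk_upper[of t] m6_pos by (cases "0 \<le> t") auto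
  then have "m6 * \<bar>t\<bar> \<le> \<bar>y\<bar>" using y by simp
  then show ?thesis unfolding t_def[symmetric] using m6_pos by (simp add: pos_le_divide_eq mult.commute)
qed

definition Gi1 where "Gi1 y = 1 / gk k (Ginvk k y)"
definition Gi2 where "Gi2 y = - gd k (Ginvk k y) / (gk k (Ginvk k y))^3"

lemma Gi1_deriv: "(Gi1 has_real_derivative Gi2 y) (at y)"
proof -
  have "((\<lambda>y. 1 / gk k (Ginvk k y)) has_real_derivative
      - (gd k (Ginvk k y) * (1 / gk k (Ginvk k y))) / (gk k (Ginvk k y))^2) (at y)"
    using DERIV_chain2[OF gk_deriv[OF k] Ginv_deriv, of y] gk_pos[OF k, of "Ginvk k y"]
    by (auto intro!: derivative_eq_intros simp: power2_eq_square)
  then show ?thesis unfolding Gi1_def[abs_def] Gi2_def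
    using gk_pos[OF k, of "Ginvk k y"] by (simp add: power2_eq_square power3_eq_cube mult.assoc)
qed

lemma Gi1_cont: "continuous_on UNIV Gi1"
  unfolding Gi1_def[abs_def]
  by (intro continuous_intros continuous_on_compose2[OF gk_cont[OF k]] Ginv_cont) (auto simp: gk_nz)

lemma Gi2_cont: "continuous_on UNIV Gi2"
  unfolding Gi2_def[abs_def] using gk_nz
  by (intro continuous_intros continuous_on_compose2[OF gk_cont[OF k]] continuous_on_compose2[OF gd_cont[OF k]] Ginv_cont) auto

end


lemma len2_cases: "length (js::'a list) \<le> 2 \<Longrightarrow> js = [] \<or> (\<exists>j. js = [j]) \<or> (\<exists>i j. js = [i, j])"
  by (cases js; cases "tl js") auto

lemma len1_cases: "length (js::'a list) \<le> 1 \<Longrightarrow> js = [] \<or> (\<exists>j. js = [j])"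
  by (cases js) auto

lemma C2I:
  fixes f :: "real^'n::finite \<Rightarrow> real"
  assumes "continuous_on UNIV f" "\<And>i x. has_pd i f x" "\<And>j. continuous_on UNIV (pd j f)"
    "\<And>i j x. has_pd i (pd j f) x" "\<And>i j. continuous_on UNIV (pd i (pd j f))"
  shows "C2 f"
  unfolding C2_def
proof (intro conjI allI impI)
  fix js :: "'n list" assume "length js \<le> 2"
  then show "continuous_on UNIV (pds js f)" using len2_cases assms by fastforce
next
  fix js :: "'n list" and i x assume "length js \<le> 1"
  then show "has_pd i (pds js f) x" using len1_cases assms by fastforce
qed

lemma C2D:
  fixes f :: "real^'n::finite \<Rightarrow> real"
  assumes "C2 f"
  shows "continuous_on UNIV f" "\<And>i x. has_pd i f x" "\<And>j. continuous_on UNIV (pd j f)"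
    "\<And>i j x. has_pd i (pd j f) x" "\<And>i j. continuous_on UNIV (pd i (pd j f))"
proof -
  have a: "\<And>js. length js \<le> 2 \<Longrightarrow> continuous_on UNIV (pds js f)"
    and b: "\<And>js i x. length js \<le> 1 \<Longrightarrow> has_pd i (pds js f) x"
    using assms unfolding C2_def by blast+
  show "continuous_on UNIV f" using a[where js="[]"] by simp
  show "\<And>i x. has_pd i f x" using b[where js="[]"] by simp
  show "\<And>j. continuous_on UNIV (pd j f)" using a[where js="[j]" for j] by simp
  show "\<And>i j x. has_pd i (pd j f) x" using b[where js="[j]" for j] by simp
  show "\<And>i j. continuous_on UNIV (pd i (pd j f))" using a[where js="[i,j]" for i j] by simp
qed

lemma weak_eq:
  fixes f w :: "real^'n::finite \<Rightarrow> real"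
  assumes cf: "continuous_on UNIV f" and hf: "\<And>x. has_pd i f x" and cpf: "continuous_on UNIV (pd i f)"
    and wk: "weak_pd i f w" and wm: "w \<in> borel_measurable lebesgue"
  shows "AE x in lebesgue. w x = pd i f x"
proof -
  have "AE x in lebesgue. w x - pd i f x = 0"
  proof (rule fund)
    show "(\<lambda>x. w x - pd i f x) \<in> borel_measurable lebesgue"
      using wm cont_meas[OF cpf] by measurable
    fix \<psi> :: "real^'n \<Rightarrow> real" assume t: "test_fun \<psi>"
    have i1: "integrable lebesgue (\<lambda>x. w x * \<psi> x)" using wk t unfolding weak_pd_def by blast
    have i2: "integrable lebesgue (\<lambda>x. pd i f x * \<psi> x)" by (rule ibp(2)[OF cf hf cpf t])
    have e: "(\<lambda>x. (w x - pd i f x) * \<psi> x) = (\<lambda>x. w x * \<psi> x - pd i f x * \<psi> x)"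
      by (auto simp: algebra_simps)
    show "integrable lebesgue (\<lambda>x. (w x - pd i f x) * \<psi> x)"
      unfolding e using i1 i2 by (rule Bochner_Integration.integrable_diff)
    have "(\<integral>x. f x * pd i \<psi> x \<partial>lebesgue) = - (\<integral>x. w x * \<psi> x \<partial>lebesgue)"
      using wk t unfolding weak_pd_def by blast
    moreover have "(\<integral>x. f x * pd i \<psi> x \<partial>lebesgue) = - (\<integral>x. pd i f x * \<psi> x \<partial>lebesgue)"
      by (rule ibp(3)[OF cf hf cpf t])
    ultimately show "(\<integral>x. (w x - pd i f x) * \<psi> x \<partial>lebesgue) = 0"
      unfolding e by (simp add: Bochner_Integration.integral_diff[OF i1 i2])
  qed
  then show ?thesis by simp
qed

lemma L2_cont:
  fixes f :: "real^'n::finite \<Rightarrow> real"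
  assumes "continuous_on UNIV f" "\<And>x. r < norm x \<Longrightarrow> f x = 0"
  shows "L2 f"
  unfolding L2_def using assms
  by (auto intro!: cont_meas int_cont_supp[where r=r] continuous_intros)

lemma test_H1:
  fixes \<phi> :: "real^'n::finite \<Rightarrow> real"
  assumes t: "test_fun \<phi>"
  shows "\<phi> \<in> H1" "\<And>i. weak_pd i \<phi> (pd i \<phi>)" "\<And>i. L2 (pd i \<phi>)"
proof -
  obtain r where r: "\<And>x. r < norm x \<Longrightarrow> \<phi> x = 0" using test_props(4)[OF t] by blast
  note c = test_props(1)[OF t] and h = test_props(2)[OF t] and cp = test_props(3)[OF t]
  show L: "L2 (pd i \<phi>)" for i
    using cp pd_vanish[OF r _ h] by (intro L2_cont[where r=r]) auto
  show W: "weak_pd i \<phi> (pd i \<phi>)" for i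
    unfolding weak_pd_def using ibp[OF c h cp] by blast
  show "\<phi> \<in> H1" unfolding H1_def using L2_cont[OF c r] L W by blast
qed

lemma weak_grad_props:
  assumes "v \<in> H1"
  shows "L2 (weak_grad v i)" "weak_pd i v (weak_grad v i)"
proof -
  have "\<exists>w. L2 w \<and> weak_pd i v w" using assms unfolding H1_def by blast
  then have "L2 (weak_grad v i) \<and> weak_pd i v (weak_grad v i)"
    unfolding weak_grad_def by (rule someI_ex)
  then show "L2 (weak_grad v i)" "weak_pd i v (weak_grad v i)" by auto
qed

lemma cont_AE_zero:
  fixes F :: "real^'n::finite \<Rightarrow> real"
  assumes c: "continuous_on UNIV F" and ae: "AE x in lebesgue. F x = 0"
  shows "F x = 0"
proof -
  have "closed {x. F x = 0}" using continuous_closed_preimage_constant[OF c closed_UNIV] by simp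
  then have "x \<in> {x. F x = 0}"
    by (rule mem_closed_if_AE_lebesgue_open[OF open_UNIV]) (use ae in auto)
  then show ?thesis by simp
qed


theorem lemma2p2:
  fixes V :: "real^'n::finite \<Rightarrow> real" and v :: "real^'n \<Rightarrow> real"
    and q \<kappa> V0 Vinf :: real
  assumes N3: "CARD('n) \<ge> 3"
    and q: "2 < q" "q < 2 * real CARD('n) / (real CARD('n) - 2)"
    and \<kappa>: "\<kappa> > 0"
    and Vcont: "continuous_on UNIV V"
    and V0: "0 < V0" "V0 \<le> Vinf"
    and Vbd: "\<And>x. V0 \<le> V x \<and> V x \<le> Vinf"
    and vC2: "C2 v" and vH1: "v \<in> H1"
    and crit: "critical_point \<kappa> q V v"
  shows "C2 (\<lambda>x. Ginvk \<kappa> (v x)) \<and> (\<lambda>x. Ginvk \<kappa> (v x)) \<in> H1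
         \<and> classical_solution \<kappa> q V (\<lambda>x. Ginvk \<kappa> (v x))"
proof -
  define u where "u = (\<lambda>x. Ginvk \<kappa> (v x))"
  note cv = C2D(1)[OF vC2] and hv = C2D(2)[OF vC2] and cpv = C2D(3)[OF vC2]
    and hpv = C2D(4)[OF vC2] and cppv = C2D(5)[OF vC2]
  have gnz: "gk \<kappa> t \<noteq> 0" for t using gk_nz[OF \<kappa>] .
  have gpos: "gk \<kappa> t > 0" for t using gk_pos[OF \<kappa>] .
  have hu: "has_pd i u x" and pdu: "pd i u x = Gi1 \<kappa> (v x) * pd i v x" for i x
    unfolding u_def using pd_chain[OF hv Ginv_deriv[OF \<kappa>]] by (auto simp: Gi1_def[OF \<kappa>])
  have e1: "pd j u = (\<lambda>x. Gi1 \<kappa> (v x) * pd j v x)" for j by (rule ext) (rule pdu)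
  have hG1: "has_pd i (\<lambda>x. Gi1 \<kappa> (v x)) x" and pdG1: "pd i (\<lambda>x. Gi1 \<kappa> (v x)) x = Gi2 \<kappa> (v x) * pd i v x"
    for i x using pd_chain[OF hv Gi1_deriv[OF \<kappa>]] by auto
  have cu: "continuous_on UNIV u"
    unfolding u_def by (rule continuous_on_compose2[OF Ginv_cont[OF \<kappa>] cv]) auto
  have cG1: "continuous_on UNIV (\<lambda>x. Gi1 \<kappa> (v x))"
    by (rule continuous_on_compose2[OF Gi1_cont[OF \<kappa>] cv]) auto
  have cG2: "continuous_on UNIV (\<lambda>x. Gi2 \<kappa> (v x))"
    by (rule continuous_on_compose2[OF Gi2_cont[OF \<kappa>] cv]) auto
  have cpu: "continuous_on UNIV (pd j u)" for j
    unfolding e1 by (intro continuous_on_mult cG1 cpv)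
  have hpu: "has_pd i (pd j u) x" for i j x
    unfolding e1 by (rule pd_mult(1)[OF hG1 hpv])
  have ppu: "pd i (pd j u) = (\<lambda>x. Gi2 \<kappa> (v x) * pd i v x * pd j v x + Gi1 \<kappa> (v x) * pd i (pd j v) x)" for i j
    unfolding e1 by (rule ext) (simp add: pd_mult(2)[OF hG1 hpv] pdG1)
  have cppu: "continuous_on UNIV (pd i (pd j u))" for i j
    unfolding ppu by (intro continuous_on_mult continuous_on_add cG1 cG2 cpv cppv)
  have C2u: "C2 u" by (rule C2I[OF cu hu cpu hpu cppu])
  have aeV: "AE x in lebesgue. weak_grad v i x = pd i v x" for i
    using weak_grad_props[OF vH1, of i] by (intro weak_eq[OF cv hv cpv]) (auto simp: L2_def)
  define H where "H x = V x * u x / gk \<kappa> (u x) - \<bar>u x\<bar> powr (q - 2) * u x / gk \<kappa> (u x)" for x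
  define F where "F x = - (\<Sum>i\<in>UNIV. pd i (pd i v) x) + H x" for x
  have cgu: "continuous_on UNIV (\<lambda>x. gk \<kappa> (u x))"
    by (rule continuous_on_compose2[OF gk_cont[OF \<kappa>] cu]) auto
  have cpow: "continuous_on UNIV (\<lambda>x. \<bar>u x\<bar> powr (q - 2))"
    using q by (intro continuous_on_powr' continuous_intros cu) auto
  have cH: "continuous_on UNIV H"
    unfolding H_def[abs_def] using gnz
    by (intro continuous_intros cu cgu cpow Vcont) auto
  have cF: "continuous_on UNIV F"
    unfolding F_def[abs_def] by (intro continuous_intros cH cppv)
  have key: "J_deriv \<kappa> q V v \<phi> = (\<integral>x. F x * \<phi> x \<partial>lebesgue)" if t: "test_fun \<phi>" for \<phi>
  proof -
    obtain r where r: "\<And>x. r < norm x \<Longrightarrow> \<phi> x = 0" using test_props(4)[OF t] by blast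
    note c\<phi> = test_props(1)[OF t] and h\<phi> = test_props(2)[OF t] and cp\<phi> = test_props(3)[OF t]
    have \<phi>H: "\<phi> \<in> H1" by (rule test_H1(1)[OF t])
    have iH: "integrable lebesgue (\<lambda>x. H x * \<phi> x)"
      by (rule int_cont_supp[where r=r]) (auto intro!: continuous_intros cH c\<phi> simp: r)
    have aeP: "AE x in lebesgue. weak_grad \<phi> i x = pd i \<phi> x" for i
      using weak_grad_props[OF \<phi>H, of i] by (intro weak_eq[OF c\<phi> h\<phi> cp\<phi>]) (auto simp: L2_def)
    have "AE x in lebesgue. \<forall>i\<in>UNIV. weak_grad v i x = pd i v x \<and> weak_grad \<phi> i x = pd i \<phi> x"
      by (intro AE_finite_allI) (auto intro: AE_conjI aeV aeP)
    then have ae: "AE x in lebesgue.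
        (\<Sum>i\<in>UNIV. weak_grad v i x * weak_grad \<phi> i x)
          + V x * Ginvk \<kappa> (v x) / gk \<kappa> (Ginvk \<kappa> (v x)) * \<phi> x
          - \<bar>Ginvk \<kappa> (v x)\<bar> powr (q - 2) * Ginvk \<kappa> (v x) / gk \<kappa> (Ginvk \<kappa> (v x)) * \<phi> x
        = (\<Sum>i\<in>UNIV. pd i v x * pd i \<phi> x) + H x * \<phi> x"
      by eventually_elim (simp add: H_def u_def algebra_simps)
    have "J_deriv \<kappa> q V v \<phi> = (\<integral>x. (\<Sum>i\<in>UNIV. pd i v x * pd i \<phi> x) + H x * \<phi> x \<partial>lebesgue)"
      unfolding J_deriv_def
    proof (rule integral_cong_AE[OF _ _ ae])
      show "(\<lambda>x. (\<Sum>i\<in>UNIV. weak_grad v i x * weak_grad \<phi> i x)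
          + V x * Ginvk \<kappa> (v x) / gk \<kappa> (Ginvk \<kappa> (v x)) * \<phi> x
          - \<bar>Ginvk \<kappa> (v x)\<bar> powr (q - 2) * Ginvk \<kappa> (v x) / gk \<kappa> (Ginvk \<kappa> (v x)) * \<phi> x) \<in> borel_measurable lebesgue"
      proof -
        have [measurable]: "weak_grad v i \<in> borel_measurable lebesgue" for i
          using weak_grad_props(1)[OF vH1] by (simp add: L2_def)
        have [measurable]: "weak_grad \<phi> i \<in> borel_measurable lebesgue" for i
          using weak_grad_props(1)[OF \<phi>H] by (simp add: L2_def)
        have [measurable]: "V \<in> borel_measurable lebesgue" "\<phi> \<in> borel_measurable lebesgue"
          "(\<lambda>x. Ginvk \<kappa> (v x)) \<in> borel_measurable lebesgue"
          "(\<lambda>x. gk \<kappa> (Ginvk \<kappa> (v x))) \<in> borel_measurable lebesgue"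
          using cont_meas[OF Vcont] cont_meas[OF c\<phi>] cont_meas[OF cu] cont_meas[OF cgu]
          by (simp_all add: u_def)
        show ?thesis by measurable
      qed
      show "(\<lambda>x. (\<Sum>i\<in>UNIV. pd i v x * pd i \<phi> x) + H x * \<phi> x) \<in> borel_measurable lebesgue"
        by (intro cont_meas continuous_intros cpv cp\<phi> cH c\<phi>)
    qed
    also have "\<dots> = (\<Sum>i\<in>UNIV. \<integral>x. pd i v x * pd i \<phi> x \<partial>lebesgue) + (\<integral>x. H x * \<phi> x \<partial>lebesgue)"
      using ibp(1)[OF cpv hpv cppv t] iH
      by (simp add: Bochner_Integration.integral_add Bochner_Integration.integrable_sum Bochner_Integration.integral_sum)
    also have "\<dots> = (\<Sum>i\<in>UNIV. - (\<integral>x. pd i (pd i v) x * \<phi> x \<partial>lebesgue)) + (\<integral>x. H x * \<phi> x \<partial>lebesgue)"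
      using ibp(3)[OF cpv hpv cppv t] by simp
    also have "\<dots> = (\<integral>x. F x * \<phi> x \<partial>lebesgue)"
    proof -
      have "(\<lambda>x. F x * \<phi> x) = (\<lambda>x. - (\<Sum>i\<in>UNIV. pd i (pd i v) x * \<phi> x) + H x * \<phi> x)"
        by (rule ext) (simp add: F_def algebra_simps sum_distrib_right sum_distrib_left)
      then show ?thesis
        using ibp(2)[OF cpv hpv cppv t] iH
        by (simp add: Bochner_Integration.integral_add Bochner_Integration.integrable_sum
             Bochner_Integration.integral_sum sum_negf)
    qed
    finally show ?thesis .
  qed
  have F0: "F x = 0" for x
  proof (rule cont_AE_zero[OF cF])
    show "AE x in lebesgue. F x = 0"
    proof (rule fund)
      show "F \<in> borel_measurable lebesgue" by (rule cont_meas[OF cF])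
      fix \<psi> :: "real^'n \<Rightarrow> real" assume t: "test_fun \<psi>"
      obtain r where r: "\<And>x. r < norm x \<Longrightarrow> \<psi> x = 0" using test_props(4)[OF t] by blast
      show "integrable lebesgue (\<lambda>x. F x * \<psi> x)"
        by (rule int_cont_supp[where r=r]) (auto intro!: continuous_intros cF test_props(1)[OF t] simp: r)
      have "J_deriv \<kappa> q V v \<psi> = 0" using crit test_H1(1)[OF t] unfolding critical_point_def by blast
      then show "(\<integral>x. F x * \<psi> x \<partial>lebesgue) = 0" using key[OF t] by simp
    qed
  qed
  have m6: "m6 > 0" using m6_pos[OF \<kappa>] .
  have L2v: "L2 v" using vH1 unfolding H1_def by blast
  have sq_bound: "(Ginvk \<kappa> y)^2 \<le> y^2 / m6^2" for y
  proof -
    have "\<bar>Ginvk \<kappa> y\<bar>^2 \<le> (\<bar>y\<bar> / m6)^2"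
      by (rule power_mono[OF Ginv_bound[OF \<kappa>]]) simp
    then show ?thesis by (simp add: power_divide)
  qed
  have L2u: "L2 u"
    unfolding L2_def
  proof
    show um: "u \<in> borel_measurable lebesgue" by (rule cont_meas[OF cu])
    have "integrable lebesgue (\<lambda>x. (v x)^2 / m6^2)" using L2v unfolding L2_def by simp
    then show "integrable lebesgue (\<lambda>x. (u x)^2)"
    proof (rule Bochner_Integration.integrable_bound)
      show "(\<lambda>x. (u x)^2) \<in> borel_measurable lebesgue" using um by measurable
      show "AE x in lebesgue. norm ((u x)^2) \<le> norm ((v x)^2 / m6^2)"
        using sq_bound by (intro AE_I2) (simp add: u_def)
    qed
  qed
  have G1b: "(Gi1 \<kappa> y)^2 \<le> 1 / m6^2" for y
  proof -
    have "m6 < gk \<kappa> (Ginvk \<kappa> y)" using gk_lower[OF \<kappa>] m6_def[OF \<kappa>] by simp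
    then have "1 / gk \<kappa> (Ginvk \<kappa> y) \<le> 1 / m6" using m6 by (intro divide_left_mono) auto
    then have "(1 / gk \<kappa> (Ginvk \<kappa> y))^2 \<le> (1/m6)^2" by (rule power_mono) (simp add: gpos less_imp_le)
    then show ?thesis by (simp add: Gi1_def[OF \<kappa>] power_divide)
  qed
  have L2pu: "L2 (pd i u)" for i
    unfolding L2_def
  proof
    show pm: "pd i u \<in> borel_measurable lebesgue" by (rule cont_meas[OF cpu])
    have "integrable lebesgue (\<lambda>x. (weak_grad v i x)^2)"
      using weak_grad_props(1)[OF vH1] unfolding L2_def by blast
    moreover have "AE x in lebesgue. (weak_grad v i x)^2 = (pd i v x)^2"
      using aeV[of i] by eventually_elim simp
    ultimately have "integrable lebesgue (\<lambda>x. (pd i v x)^2)"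
      using weak_grad_props(1)[OF vH1, of i] cont_meas[OF cpv]
      by (subst integrable_cong_AE[symmetric]) (auto simp: L2_def)
    then have "integrable lebesgue (\<lambda>x. (pd i v x)^2 / m6^2)" by simp
    then show "integrable lebesgue (\<lambda>x. (pd i u x)^2)"
    proof (rule Bochner_Integration.integrable_bound)
      show "(\<lambda>x. (pd i u x)^2) \<in> borel_measurable lebesgue" using pm by measurable
      show "AE x in lebesgue. norm ((pd i u x)^2) \<le> norm ((pd i v x)^2 / m6^2)"
      proof (rule AE_I2)
        fix x
        have "(Gi1 \<kappa> (v x))^2 * (pd i v x)^2 \<le> 1 / m6^2 * (pd i v x)^2"
          by (rule mult_right_mono[OF G1b]) simp
        then show "norm ((pd i u x)^2) \<le> norm ((pd i v x)^2 / m6^2)"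
          by (simp add: pdu power_mult_distrib)
      qed
    qed
  qed
  have uH1: "u \<in> H1"
    unfolding H1_def
  proof (intro CollectI conjI allI)
    show "L2 u" by (rule L2u)
    fix i
    have "weak_pd i u (pd i u)"
      unfolding weak_pd_def using ibp[OF cu hu cpu] by blast
    then show "\<exists>w. L2 w \<and> weak_pd i u w" using L2pu by blast
  qed
  have eqn: "- (\<Sum>i\<in>UNIV. pd i (\<lambda>y. (gk \<kappa> (u y))\<^sup>2 * pd i u y) x)
      + gk \<kappa> (u x) * deriv (gk \<kappa>) (u x) * (\<Sum>i\<in>UNIV. (pd i u x)\<^sup>2)
      + V x * u x = \<bar>u x\<bar> powr (q - 2) * u x" for x
  proof -
    define g where "g = gk \<kappa> (u x)"
    define d where "d = gd \<kappa> (u x)"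
    have g0: "g \<noteq> 0" using gnz by (simp add: g_def)
    have pu': "pd i u y = pd i v y / gk \<kappa> (u y)" for i y
      using pdu[of i y] by (simp add: Gi1_def[OF \<kappa>] u_def)
    have e2: "(\<lambda>y. (gk \<kappa> (u y))\<^sup>2 * pd i u y) = (\<lambda>y. gk \<kappa> (u y) * pd i v y)" for i
      by (rule ext) (simp add: pu' power2_eq_square gnz)
    have hg: "has_pd i (\<lambda>y. gk \<kappa> (u y)) x" and pg: "pd i (\<lambda>y. gk \<kappa> (u y)) x = d * pd i u x" for i
      using pd_chain[OF hu gk_deriv[OF \<kappa>]] by (auto simp: d_def)
    have p3: "pd i (\<lambda>y. gk \<kappa> (u y) * pd i v y) x = d / g * (pd i v x)^2 + g * pd i (pd i v) x" for i
      using pd_mult(2)[OF hg hpv, of i] pg[of i] by (simp add: pu' g_def power2_eq_square)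
    have S1: "(\<Sum>i\<in>UNIV. pd i (\<lambda>y. (gk \<kappa> (u y))\<^sup>2 * pd i u y) x)
        = d / g * (\<Sum>i\<in>UNIV. (pd i v x)^2) + g * (\<Sum>i\<in>UNIV. pd i (pd i v) x)"
      unfolding e2 p3 by (simp add: sum.distrib sum_distrib_left)
    have S2: "(\<Sum>i\<in>UNIV. (pd i u x)\<^sup>2) = (\<Sum>i\<in>UNIV. (pd i v x)^2) / g^2"
      by (simp add: pu' g_def[symmetric] power_divide sum_divide_distrib)
    have dd: "deriv (gk \<kappa>) (u x) = d" by (simp add: deriv_gk[OF \<kappa>] d_def)
    have Sdd: "(\<Sum>i\<in>UNIV. pd i (pd i v) x) = V x * u x / g - \<bar>u x\<bar> powr (q - 2) * u x / g"
      using F0[of x] by (simp add: F_def H_def g_def)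
    show ?thesis
      unfolding S1 S2 dd g_def[symmetric] Sdd using g0
      by (simp add: field_simps power2_eq_square)
  qed
  show ?thesis
    unfolding u_def[symmetric] classical_solution_def using C2u uH1 eqn by blast
qed


end
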